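(* For any SETAF $S=(A,X)$ it holds that $\sigma(S) = \sigma(D_S)$ for every $\sigma \in \{\mathrm{adm},\mathrm{com},\mathrm{prf},\mathrm{mod}\}$.
   Context: Let $A$ be a fixed finite set of statements. An interpretation is a mapping $v:A\to\{\mathbf{t},\mathbf{f},\mathbf{u}\}$; it is two-valued if it never assigns $\mathbf{u}$. The information ordering is $\mathbf{u}<_i\mathbf{t}$, $\mathbf{u}<_i\mathbf{f}$ (no other strict pairs), extended pointwise to interpretations. The consensus meet $\sqcap_i$ of truth values gives $\mathbf{t}\sqcap_i\mathbf{t}=\mathbf{t}$, $\mathbf{f}\sqcap_i\mathbf{f}=\mathbf{f}$, and $\mathbf{u}$ otherwise; the consensus of a nonempty set of truth values is their greatest lower bound with respect to $\leq_i$. For an interpretation $v$, $[v]_2$ denotes the set of all two-valued interpretations $w$ with $v\leq_i w$. An ADF is $D=(A,L,C)$ where $L\subseteq A\times A$ and each statement $a$ has an acceptance condition given by a propositional formula $\varphi_a$ over its parents. The operator $\Gamma_D$ maps an interpretation $v$ to the interpretation assigning to each $a$ the consensus (greatest lower bound w.r.t. $\leq_i$) of $\{w(\varphi_a) \mid w\in[v]_2\}$. For an ADF $D$, $v$ is admissible iff $v\leq_i\Gamma_D(v)$; complete iff $\Gamma_D(v)=v$; preferred iff it is $\leq_i$-maximal admissible; a two-valued model iff it is two-valued and $\Gamma_D(v)=v$. These sets are denoted $\mathrm{adm}(D),\mathrm{com}(D),\mathrm{prf}(D),\mathrm{mod}(D)$. A SETAF is a pair $S=(A,X)$ with $X\subseteq(2^A\setminus\{\emptyset\})\times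 A$. For a statement $a$ and interpretation $v$: $a$ is acceptable wrt. $v$ if for all $(B,a)\in X$ there is $a'\in B$ with $v(a')=\mathbf{f}$; $a$ is unacceptable wrt. $v$ if there is $(B,a)\in X$ with $v(a')=\mathbf{t}$ for all $a'\in B$. Then: $v\in\mathrm{adm}(S)$ iff for all $a$, $v(a)=\mathbf{t}$ implies $a$ acceptable and $v(a)=\mathbf{f}$ implies $a$ unacceptable wrt. $v$; $v\in\mathrm{com}(S)$ iff for all $a$, $a$ is acceptable wrt. $v$ iff $v(a)=\mathbf{t}$, and $a$ is unacceptable wrt. $v$ iff $v(a)=\mathbf{f}$; $v\in\mathrm{prf}(S)$ iff $v$ is $\leq_i$-maximal admissible; $v\in\mathrm{mod}(S)$ iff $v\in\mathrm{adm}(S)$ and $v$ assigns $\mathbf{u}$ to no statement. The ADF $D_S$ corresponding to $S$ has acceptance formula $\varphi_a=\bigwedge_{(B,a)\in X}\bigvee_{a'\in B}\neg a'$ for each $a\in A$. *)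

theory Defs
  imports Main "HOL-Library.FSet"
begin

text \<open>The fixed finite set of statements A is the universe of a finite type 'a.\<close>

datatype tv = T | F | U

definition info_le :: "tv \<Rightarrow> tv \<Rightarrow> bool" where
  "info_le x y \<longleftrightarrow> x = y \<or> x = U"

definition info_le_int :: "('a \<Rightarrow> tv) \<Rightarrow> ('a \<Rightarrow> tv) \<Rightarrow> bool" where
  "info_le_int v w \<longleftrightarrow> (\<forall>a. info_le (v a) (w a))"

definition two_valued :: "('a \<Rightarrow> tv) \<Rightarrow> bool" where
  "two_valued v \<longleftrightarrow> (\<forall>a. v a \<noteq> U)"

text \<open>Consensus (greatest lower bound w.r.t. the information order) of a nonempty set.\<close>
definition consensus :: "tv set \<Rightarrow> tv" where
  "consensus S = (if S = {T} then T else if S = {F} then F else U)"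

definition tv_of :: "bool \<Rightarrow> tv" where
  "tv_of b = (if b then T else F)"

definition completions :: "('a \<Rightarrow> tv) \<Rightarrow> ('a \<Rightarrow> tv) set" where
  "completions v = {w. two_valued w \<and> info_le_int v w}"

datatype 'a form = Atom 'a | Neg "'a form" | Conj "'a form fset" | Disj "'a form fset"

primrec eval :: "('a \<Rightarrow> tv) \<Rightarrow> 'a form \<Rightarrow> bool" where
  "eval w (Atom a) = (w a = T)"
| "eval w (Neg \<phi>) = (\<not> eval w \<phi>)"
| "eval w (Conj S) = (\<forall>b\<in>fset (fimage (eval w) S). b)"
| "eval w (Disj S) = (\<exists>b\<in>fset (fimage (eval w) S). b)"

text \<open>An ADF D = (A, L, C): A is UNIV, links L, and acceptance formulas.\<close>
type_synonym 'a adf = "('a \<times> 'a) set \<times> ('a \<Rightarrow> 'a form)"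

definition Gamma :: "'a adf \<Rightarrow> ('a \<Rightarrow> tv) \<Rightarrow> ('a \<Rightarrow> tv)" where
  "Gamma D v = (\<lambda>a. consensus {tv_of (eval w (snd D a)) | w. w \<in> completions v})"

definition adf_adm :: "'a adf \<Rightarrow> ('a \<Rightarrow> tv) set" where
  "adf_adm D = {v. info_le_int v (Gamma D v)}"

definition adf_com :: "'a adf \<Rightarrow> ('a \<Rightarrow> tv) set" where
  "adf_com D = {v. Gamma D v = v}"

definition adf_prf :: "'a adf \<Rightarrow> ('a \<Rightarrow> tv) set" where
  "adf_prf D = {v. v \<in> adf_adm D \<and>
      (\<forall>v'\<in>adf_adm D. info_le_int v v' \<longrightarrow> v' = v)}"

definition adf_mod :: "'a adf \<Rightarrow> ('a \<Rightarrow> tv) set" where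
  "adf_mod D = {v. two_valued v \<and> Gamma D v = v}"

text \<open>A SETAF (A, X) with A = UNIV; X is a set of attacks (B, a) with B nonempty.\<close>
definition wf_setaf :: "('a set \<times> 'a) set \<Rightarrow> bool" where
  "wf_setaf X \<longleftrightarrow> (\<forall>(B, a)\<in>X. B \<noteq> {})"

definition acceptable :: "('a set \<times> 'a) set \<Rightarrow> ('a \<Rightarrow> tv) \<Rightarrow> 'a \<Rightarrow> bool" where
  "acceptable X v a \<longleftrightarrow> (\<forall>B. (B, a) \<in> X \<longrightarrow> (\<exists>a'\<in>B. v a' = F))"

definition unacceptable :: "('a set \<times> 'a) set \<Rightarrow> ('a \<Rightarrow> tv) \<Rightarrow> 'a \<Rightarrow> bool" where
  "unacceptable X v a \<longleftrightarrow> (\<exists>B. (B, a) \<in> X \<and> (\<forall>a'\<in>B. v a' = T))"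

definition setaf_adm :: "('a set \<times> 'a) set \<Rightarrow> ('a \<Rightarrow> tv) set" where
  "setaf_adm X = {v. \<forall>a. (v a = T \<longrightarrow> acceptable X v a) \<and> (v a = F \<longrightarrow> unacceptable X v a)}"

definition setaf_com :: "('a set \<times> 'a) set \<Rightarrow> ('a \<Rightarrow> tv) set" where
  "setaf_com X = {v. \<forall>a. (acceptable X v a \<longleftrightarrow> v a = T) \<and> (unacceptable X v a \<longleftrightarrow> v a = F)}"

definition setaf_prf :: "('a set \<times> 'a) set \<Rightarrow> ('a \<Rightarrow> tv) set" where
  "setaf_prf X = {v. v \<in> setaf_adm X \<and>
      (\<forall>v'\<in>setaf_adm X. info_le_int v v' \<longrightarrow> v' = v)}"

definition setaf_mod :: "('a set \<times> 'a) set \<Rightarrow> ('a \<Rightarrow> tv) set" where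
  "setaf_mod X = {v. v \<in> setaf_adm X \<and> two_valued v}"

text \<open>The ADF D_S associated with a SETAF: phi_a = AND_{(B,a) in X} OR_{a' in B} not a'.\<close>
definition setaf_adf :: "('a::finite set \<times> 'a) set \<Rightarrow> 'a adf" where
  "setaf_adf X =
     ({(b, a). \<exists>B. (B, a) \<in> X \<and> b \<in> B},
      (\<lambda>a. Conj (Abs_fset ((\<lambda>B. Disj (Abs_fset ((\<lambda>b. Neg (Atom b)) ` B)))
                              ` {B. (B, a) \<in> X}))))"

end

theory Submission
  imports Defs
begin

lemma fset_Abs_fin: "finite S \<Longrightarrow> fset (Abs_fset S) = S"
  by (simp add: Abs_fset_inverse)

lemma eval_phi:
  fixes X :: "('a::finite set \<times> 'a) set"
  shows "eval w (snd (setaf_adf X) a) \<longleftrightarrow> (\<forall>B. (B,a)\<in>X \<longrightarrow> (\<exists>b\<in>B. w b \<noteq> T))"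
proof -
  have f1: "finite ((\<lambda>B. Disj (Abs_fset ((\<lambda>b. Neg (Atom b)) ` B))) ` {B. (B, a) \<in> X})"
    by simp
  have f2: "\<And>B::'a set. finite ((\<lambda>b. Neg (Atom b)) ` B)" by simp
  have "snd (setaf_adf X) a = Conj (Abs_fset ((\<lambda>B. Disj (Abs_fset ((\<lambda>b. Neg (Atom b)) ` B))) ` {B. (B, a) \<in> X}))"
    unfolding setaf_adf_def by simp
  hence "eval w (snd (setaf_adf X) a) \<longleftrightarrow> (\<forall>x\<in>(\<lambda>B. Disj (Abs_fset ((\<lambda>b. Neg (Atom b)) ` B))) ` {B. (B, a) \<in> X}. eval w x)"
    by (simp only: eval.simps fimage.rep_eq fset_Abs_fin[OF f1] ball_simps image_iff) blast
  also have "\<dots> \<longleftrightarrow> (\<forall>B. (B,a)\<in>X \<longrightarrow> eval w (Disj (Abs_fset ((\<lambda>b. Neg (Atom b)) ` B))))"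
    by blast
  also have "\<dots> \<longleftrightarrow> (\<forall>B. (B,a)\<in>X \<longrightarrow> (\<exists>b\<in>B. w b \<noteq> T))"
    by (simp only: eval.simps fimage.rep_eq fset_Abs_fin[OF f2]) auto
  finally show ?thesis .
qed

definition gv :: "('a set \<times> 'a) set \<Rightarrow> ('a \<Rightarrow> tv) \<Rightarrow> 'a \<Rightarrow> tv" where
  "gv X v a = (if acceptable X v a then T else if unacceptable X v a then F else U)"

lemma excl: "acceptable X v a \<Longrightarrow> unacceptable X v a \<Longrightarrow> False"
  unfolding acceptable_def unacceptable_def by fastforce

lemma Gamma_eq:
  fixes X :: "('a::finite set \<times> 'a) set"
  shows "Gamma (setaf_adf X) v a = gv X v a"
proof -
  let ?S = "{tv_of (eval w (snd (setaf_adf X) a)) | w. w \<in> completions v}"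
  define w1 where "w1 = (\<lambda>b. if v b = U then T else v b)"
  define w2 where "w2 = (\<lambda>b. if v b = U then F else v b)"
  have c1: "w1 \<in> completions v" unfolding w1_def completions_def two_valued_def info_le_int_def info_le_def
    by auto
  have c2: "w2 \<in> completions v" unfolding w2_def completions_def two_valued_def info_le_int_def info_le_def
    by auto
  have cw: "\<And>w b. w \<in> completions v \<Longrightarrow> v b \<noteq> U \<Longrightarrow> w b = v b"
  proof -
    fix w b assume "w \<in> completions v" "v b \<noteq> U"
    hence "info_le (v b) (w b)" unfolding completions_def info_le_int_def by simp
    thus "w b = v b" using \<open>v b \<noteq> U\<close> unfolding info_le_def by simp
  qed
  show ?thesis
  proof (cases "acceptable X v a")
    case True
    have "\<And>w. w \<in> completions v \<Longrightarrow> eval w (snd (setaf_adf X) a)"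
    proof -
      fix w assume w: "w \<in> completions v"
      show "eval w (snd (setaf_adf X) a)" unfolding eval_phi
      proof (intro allI impI)
        fix B assume "(B, a) \<in> X"
        then obtain b where "b \<in> B" "v b = F" using True unfolding acceptable_def by blast
        hence "w b = F" using cw[OF w, of b] by simp
        moreover have "F \<noteq> T" by simp
        ultimately show "\<exists>b\<in>B. w b \<noteq> T" using \<open>b \<in> B\<close> by metis
      qed
    qed
    hence "?S = {T}" using c1 by (auto simp: tv_of_def)
    thus ?thesis using True by (simp add: Gamma_def gv_def consensus_def)
  next
    case nA: False
    then obtain B where B: "(B, a) \<in> X" "\<forall>b\<in>B. v b \<noteq> F" unfolding acceptable_def by blast
    have "\<forall>b\<in>B. w1 b = T" using B(2) unfolding w1_def by (metis tv.exhaust)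
    hence e1: "\<not> eval w1 (snd (setaf_adf X) a)"
      using B(1) unfolding eval_phi by blast
    show ?thesis
    proof (cases "unacceptable X v a")
      case True
      then obtain B' where B': "(B', a) \<in> X" "\<forall>b\<in>B'. v b = T" unfolding unacceptable_def by blast
      have "\<And>w. w \<in> completions v \<Longrightarrow> \<not> eval w (snd (setaf_adf X) a)"
      proof -
        fix w assume w: "w \<in> completions v"
        have "\<forall>b\<in>B'. w b = T" using B'(2) cw[OF w] by simp
        thus "\<not> eval w (snd (setaf_adf X) a)" using B'(1) unfolding eval_phi by blast
      qed
      hence "?S = {F}" using c1 by (auto simp: tv_of_def)
      thus ?thesis using True nA by (simp add: Gamma_def gv_def consensus_def)
    next
      case False
      have "\<forall>B. (B,a)\<in>X \<longrightarrow> (\<exists>b\<in>B. w2 b \<noteq> T)"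
      proof (intro allI impI)
        fix B assume "(B, a) \<in> X"
        then obtain b where "b \<in> B" "v b \<noteq> T" using False unfolding unacceptable_def by blast
        hence "w2 b \<noteq> T" unfolding w2_def by simp
        thus "\<exists>b\<in>B. w2 b \<noteq> T" using \<open>b \<in> B\<close> by blast
      qed
      hence e2: "eval w2 (snd (setaf_adf X) a)" unfolding eval_phi .
      have "T \<in> ?S" using c2 e2 by (force simp: tv_of_def)
      moreover have "F \<in> ?S" using c1 e1 by (force simp: tv_of_def)
      ultimately have "consensus ?S = U" unfolding consensus_def by auto
      thus ?thesis using False nA by (simp add: Gamma_def gv_def)
    qed
  qed
qed

lemma Gamma_gv:
  fixes X :: "('a::finite set \<times> 'a) set"
  shows "Gamma (setaf_adf X) v = gv X v"
  using Gamma_eq by blast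

lemma adm_eq:
  fixes X :: "('a::finite set \<times> 'a) set"
  shows "setaf_adm X = adf_adm (setaf_adf X)"
  unfolding setaf_adm_def adf_adm_def Gamma_gv info_le_int_def
proof (intro Collect_cong iffI allI conjI)
  fix v a assume h: "\<forall>a. (v a = T \<longrightarrow> acceptable X v a) \<and> (v a = F \<longrightarrow> unacceptable X v a)"
  show "info_le (v a) (gv X v a)"
    using h[rule_format, of a] excl[of X v a] unfolding info_le_def gv_def by (cases "v a") auto
next
  fix v a assume h: "\<forall>a. info_le (v a) (gv X v a)"
  have "info_le (v a) (gv X v a)" using h by simp
  then show "v a = T \<longrightarrow> acceptable X v a" "v a = F \<longrightarrow> unacceptable X v a"
    unfolding info_le_def gv_def by (auto split: if_splits)
qed

theorem proposition1:
  fixes X :: "('a::finite set \<times> 'a) set"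
  assumes "wf_setaf X"
  shows "setaf_adm X = adf_adm (setaf_adf X)
       \<and> setaf_com X = adf_com (setaf_adf X)
       \<and> setaf_prf X = adf_prf (setaf_adf X)
       \<and> setaf_mod X = adf_mod (setaf_adf X)"
proof (intro conjI)
  show a: "setaf_adm X = adf_adm (setaf_adf X)" by (rule adm_eq)
  show "setaf_com X = adf_com (setaf_adf X)"
    unfolding setaf_com_def adf_com_def Gamma_gv
  proof (rule Collect_cong, rule iffI)
    fix v assume h: "\<forall>a. (acceptable X v a \<longleftrightarrow> v a = T) \<and> (unacceptable X v a \<longleftrightarrow> v a = F)"
    show "gv X v = v"
    proof
      fix b show "gv X v b = v b" using h[rule_format, of b] unfolding gv_def by (cases "v b") auto
    qed
  next
    fix v assume h: "gv X v = v"
    show "\<forall>a. (acceptable X v a \<longleftrightarrow> v a = T) \<and> (unacceptable X v a \<longleftrightarrow> v a = F)"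
    proof
      fix a
      have "gv X v a = v a" using h by simp
      thus "(acceptable X v a \<longleftrightarrow> v a = T) \<and> (unacceptable X v a \<longleftrightarrow> v a = F)"
        unfolding gv_def using excl[of X v a] by (auto split: if_splits)
    qed
  qed
  show "setaf_prf X = adf_prf (setaf_adf X)"
    unfolding setaf_prf_def adf_prf_def a ..
  show "setaf_mod X = adf_mod (setaf_adf X)"
    unfolding setaf_mod_def adf_mod_def
  proof (rule Collect_cong, rule iffI, rule conjI)
    fix v assume h: "v \<in> setaf_adm X \<and> two_valued v"
    hence h1: "v \<in> adf_adm (setaf_adf X)" using a by simp
    show "two_valued v" using h by simp
    show "Gamma (setaf_adf X) v = v"
    proof
      fix b
      have "info_le (v b) (Gamma (setaf_adf X) v b)" using h1 unfolding adf_adm_def info_le_int_def by simp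
      moreover have "v b \<noteq> U" using h unfolding two_valued_def by simp
      ultimately show "Gamma (setaf_adf X) v b = v b" unfolding info_le_def by simp
    qed
  next
    fix v assume h: "two_valued v \<and> Gamma (setaf_adf X) v = v"
    hence "v \<in> adf_adm (setaf_adf X)" unfolding adf_adm_def info_le_int_def info_le_def by simp
    thus "v \<in> setaf_adm X \<and> two_valued v" using a h by simp
  qed
qed

end
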